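(* For every irreducible $*$-representation $\pi$ of $\mathcal{A}(\mathbb{C}P^2_q)$ by bounded operators on a Hilbert space, either $\ker\pi(p_{11})=\{0\}$, or $\pi(p_{11})=\pi(p_{12})=\pi(p_{13})=0$ (and hence also $\pi(p_{21})=\pi(p_{31})=0$).
   Context: Fix $0<q<1$. $\mathcal{A}(S^5_q)$ is the unital $*$-algebra generated by $z_1,z_2,z_3$ and adjoints with relations $z_iz_j=qz_jz_i$ ($i<j$), $z_i^*z_j=qz_jz_i^*$ ($i\ne j$), $[z_1^*,z_1]=0$, $[z_2^*,z_2]=(1-q^2)z_1z_1^*$, $[z_3^*,z_3]=(1-q^2)(z_1z_1^*+z_2z_2^* )$, $z_1z_1^*+z_2z_2^*+z_3z_3^*=1$. $\mathcal{A}(\mathbb{C}P^2_q)$ is the unital $*$-subalgebra generated by $p_{ij}:=z_i^*z_j$; note $p_{ij}^*=p_{ji}$. *)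

theory Defs
  imports "HOL-Analysis.Analysis"
begin

text \<open>Every complex Hilbert space is unitarily equivalent to l2(I) for some index set I;
  we take I to be an arbitrary type 'i.\<close>

definition ell2 :: "('i \<Rightarrow> complex) set" where
  "ell2 = {x. (\<lambda>k. (cmod (x k))^2) summable_on UNIV}"

definition l2norm :: "('i \<Rightarrow> complex) \<Rightarrow> real" where
  "l2norm x = sqrt (infsum (\<lambda>k. (cmod (x k))^2) UNIV)"

definition l2inner :: "('i \<Rightarrow> complex) \<Rightarrow> ('i \<Rightarrow> complex) \<Rightarrow> complex" where
  "l2inner x y = infsum (\<lambda>k. cnj (x k) * y k) UNIV"

definition bounded_op :: "(('i \<Rightarrow> complex) \<Rightarrow> ('i \<Rightarrow> complex)) \<Rightarrow> bool" where
  "bounded_op T \<longleftrightarrow>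
     (\<forall>x\<in>ell2. T x \<in> ell2) \<and>
     (\<forall>x\<in>ell2. \<forall>y\<in>ell2. T (\<lambda>k. x k + y k) = (\<lambda>k. T x k + T y k)) \<and>
     (\<forall>x\<in>ell2. \<forall>c. T (\<lambda>k. c * x k) = (\<lambda>k. c * T x k)) \<and>
     (\<exists>C. \<forall>x\<in>ell2. l2norm (T x) \<le> C * l2norm x)"

definition is_adjoint :: "(('i \<Rightarrow> complex) \<Rightarrow> ('i \<Rightarrow> complex)) \<Rightarrow> (('i \<Rightarrow> complex) \<Rightarrow> ('i \<Rightarrow> complex)) \<Rightarrow> bool" where
  "is_adjoint S T \<longleftrightarrow> (\<forall>x\<in>ell2. \<forall>y\<in>ell2. l2inner (T x) y = l2inner x (S y))"

definition closed_subspace :: "('i \<Rightarrow> complex) set \<Rightarrow> bool" where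
  "closed_subspace K \<longleftrightarrow> K \<subseteq> ell2 \<and> (\<lambda>k. 0) \<in> K \<and>
     (\<forall>x\<in>K. \<forall>y\<in>K. (\<lambda>k. x k + y k) \<in> K) \<and>
     (\<forall>x\<in>K. \<forall>c. (\<lambda>k. c * x k) \<in> K) \<and>
     (\<forall>s x. (\<forall>n. s n \<in> K) \<and> x \<in> ell2 \<and>
            (\<lambda>n. l2norm (\<lambda>k. s n k - x k)) \<longlonglongrightarrow> 0 \<longrightarrow> x \<in> K)"

text \<open>An element of the free unital complex algebra on an alphabet 'a is represented by a
  formal finite sum of coefficient/word pairs.\<close>

type_synonym 'a ncpoly = "(complex \<times> 'a list) list"

definition nccoeff :: "'a ncpoly \<Rightarrow> 'a list \<Rightarrow> complex" where
  "nccoeff f w = sum_list [fst m. m \<leftarrow> f, snd m = w]"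

definition ncone :: "'a ncpoly" where "ncone = [(1, [])]"
definition ncgen :: "'a \<Rightarrow> 'a ncpoly" where "ncgen a = [(1, [a])]"
definition ncadd :: "'a ncpoly \<Rightarrow> 'a ncpoly \<Rightarrow> 'a ncpoly" where "ncadd f g = f @ g"
definition ncsmult :: "complex \<Rightarrow> 'a ncpoly \<Rightarrow> 'a ncpoly" where
  "ncsmult c f = map (\<lambda>(a, u). (c * a, u)) f"
definition ncsub :: "'a ncpoly \<Rightarrow> 'a ncpoly \<Rightarrow> 'a ncpoly" where
  "ncsub f g = f @ ncsmult (-1) g"
definition ncmul :: "'a ncpoly \<Rightarrow> 'a ncpoly \<Rightarrow> 'a ncpoly" where
  "ncmul f g = concat (map (\<lambda>(a, u). map (\<lambda>(b, v). (a * b, u @ v)) g) f)"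

definition ncsubst :: "('a \<Rightarrow> 'b ncpoly) \<Rightarrow> 'a ncpoly \<Rightarrow> 'b ncpoly" where
  "ncsubst \<sigma> f = concat (map (\<lambda>(a, u). ncsmult a (foldr (\<lambda>l p. ncmul (\<sigma> l) p) u ncone)) f)"

definition in_ideal :: "'a ncpoly set \<Rightarrow> 'a ncpoly \<Rightarrow> bool" where
  "in_ideal R f \<longleftrightarrow> (\<exists>ts :: (complex \<times> 'a list \<times> 'a ncpoly \<times> 'a list) list.
      (\<forall>t\<in>set ts. fst (snd (snd t)) \<in> R) \<and>
      nccoeff f = nccoeff (concat (map (\<lambda>(c, u, r, v). ncsmult c (ncmul (ncmul [(1, u)] r) [(1, v)])) ts)))"

datatype idx = I1 | I2 | I3

fun idxnum :: "idx \<Rightarrow> nat" where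
  "idxnum I1 = 1" | "idxnum I2 = 2" | "idxnum I3 = 3"

datatype gen = Z idx | ZS idx

fun genstar :: "gen \<Rightarrow> gen" where
  "genstar (Z i) = ZS i" | "genstar (ZS i) = Z i"

definition ncstar :: "gen ncpoly \<Rightarrow> gen ncpoly" where
  "ncstar f = map (\<lambda>(a, u). (cnj a, rev (map genstar u))) f"

definition S5_rels :: "real \<Rightarrow> gen ncpoly set" where
  "S5_rels q =
     {ncsub (ncmul (ncgen (Z i)) (ncgen (Z j))) (ncsmult (of_real q) (ncmul (ncgen (Z j)) (ncgen (Z i))))
       | i j. idxnum i < idxnum j}
   \<union> {ncsub (ncmul (ncgen (ZS i)) (ncgen (Z j))) (ncsmult (of_real q) (ncmul (ncgen (Z j)) (ncgen (ZS i))))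
       | i j. i \<noteq> j}
   \<union> {ncsub (ncmul (ncgen (ZS I1)) (ncgen (Z I1))) (ncmul (ncgen (Z I1)) (ncgen (ZS I1))),
      ncsub (ncsub (ncmul (ncgen (ZS I2)) (ncgen (Z I2))) (ncmul (ncgen (Z I2)) (ncgen (ZS I2))))
            (ncsmult (of_real (1 - q^2)) (ncmul (ncgen (Z I1)) (ncgen (ZS I1)))),
      ncsub (ncsub (ncmul (ncgen (ZS I3)) (ncgen (Z I3))) (ncmul (ncgen (Z I3)) (ncgen (ZS I3))))
            (ncsmult (of_real (1 - q^2))
               (ncadd (ncmul (ncgen (Z I1)) (ncgen (ZS I1))) (ncmul (ncgen (Z I2)) (ncgen (ZS I2))))),
      ncsub (ncadd (ncadd (ncmul (ncgen (Z I1)) (ncgen (ZS I1))) (ncmul (ncgen (Z I2)) (ncgen (ZS I2))))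
                   (ncmul (ncgen (Z I3)) (ncgen (ZS I3))))
            ncone}"

definition S5_ideal_gens :: "real \<Rightarrow> gen ncpoly set" where
  "S5_ideal_gens q = S5_rels q \<union> ncstar ` S5_rels q"

definition p_gen :: "idx \<times> idx \<Rightarrow> gen ncpoly" where
  "p_gen ij = ncmul (ncgen (ZS (fst ij))) (ncgen (Z (snd ij)))"

definition CP2_zero :: "real \<Rightarrow> (idx \<times> idx) ncpoly \<Rightarrow> bool" where
  "CP2_zero q f \<longleftrightarrow> in_ideal (S5_ideal_gens q) (ncsubst p_gen f)"

definition evop :: "('a \<Rightarrow> ('i \<Rightarrow> complex) \<Rightarrow> ('i \<Rightarrow> complex)) \<Rightarrow> 'a ncpoly
                    \<Rightarrow> ('i \<Rightarrow> complex) \<Rightarrow> ('i \<Rightarrow> complex)" where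
  "evop P f x = (\<lambda>k. sum_list (map (\<lambda>(a, u). a * foldr P u x k) f))"

text \<open>A (unital) *-representation of A(CP^2_q) by bounded operators on l2('i), given by the
  images P (i,j) = pi(p_ij) of the generators.\<close>
definition CP2_star_rep :: "real \<Rightarrow> (idx \<times> idx \<Rightarrow> ('i \<Rightarrow> complex) \<Rightarrow> ('i \<Rightarrow> complex)) \<Rightarrow> bool" where
  "CP2_star_rep q P \<longleftrightarrow>
     (\<forall>i j. bounded_op (P (i, j))) \<and>
     (\<forall>i j. is_adjoint (P (j, i)) (P (i, j))) \<and>
     (\<forall>f. CP2_zero q f \<longrightarrow> (\<forall>x\<in>ell2. evop P f x = (\<lambda>k. 0)))"

definition irreducible_rep :: "(idx \<times> idx \<Rightarrow> ('i \<Rightarrow> complex) \<Rightarrow> ('i \<Rightarrow> complex)) \<Rightarrow> bool" where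
  "irreducible_rep P \<longleftrightarrow>
     \<not> (\<exists>K. closed_subspace K \<and> K \<noteq> {\<lambda>k. 0} \<and> K \<noteq> ell2 \<and>
            (\<forall>f. \<forall>x\<in>K. evop P f x \<in> K))"

end

theory Submission imports Defs begin


lemma nccoeff_Nil[simp]: "nccoeff [] w = 0" by (simp add: nccoeff_def)
lemma nccoeff_Cons[simp]: "nccoeff ((c,u)#f) w = (if w = u then c else 0) + nccoeff f w"
  by (auto simp: nccoeff_def)

lemma S5_in: "r \<in> S5_rels q \<Longrightarrow> r \<in> S5_ideal_gens q" by (simp add: S5_ideal_gens_def)
lemma S5_star_in: "r \<in> S5_rels q \<Longrightarrow> ncstar r \<in> S5_ideal_gens q" by (simp add: S5_ideal_gens_def)

definition R1 :: "real \<Rightarrow> idx \<Rightarrow> idx \<Rightarrow> gen ncpoly" where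
 "R1 q i j = ncsub (ncmul (ncgen (Z i)) (ncgen (Z j))) (ncsmult (of_real q) (ncmul (ncgen (Z j)) (ncgen (Z i))))"
definition R2 :: "real \<Rightarrow> idx \<Rightarrow> idx \<Rightarrow> gen ncpoly" where
 "R2 q i j = ncsub (ncmul (ncgen (ZS i)) (ncgen (Z j))) (ncsmult (of_real q) (ncmul (ncgen (Z j)) (ncgen (ZS i))))"
definition R3 :: "gen ncpoly" where
 "R3 = ncsub (ncmul (ncgen (ZS I1)) (ncgen (Z I1))) (ncmul (ncgen (Z I1)) (ncgen (ZS I1)))"
definition R4 :: "gen ncpoly" where
 "R4 = ncsub (ncadd (ncadd (ncmul (ncgen (Z I1)) (ncgen (ZS I1))) (ncmul (ncgen (Z I2)) (ncgen (ZS I2))))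
                   (ncmul (ncgen (Z I3)) (ncgen (ZS I3))))  ncone"

lemma R1_in: "idxnum i < idxnum j \<Longrightarrow> R1 q i j \<in> S5_ideal_gens q"
  unfolding R1_def by (rule S5_in) (auto simp: S5_rels_def)
lemma R1s_in: "idxnum i < idxnum j \<Longrightarrow> ncstar (R1 q i j) \<in> S5_ideal_gens q"
  unfolding R1_def by (rule S5_star_in) (auto simp: S5_rels_def)
lemma R2_in: "i \<noteq> j \<Longrightarrow> R2 q i j \<in> S5_ideal_gens q"
  unfolding R2_def by (rule S5_in) (auto simp: S5_rels_def)
lemma R2s_in: "i \<noteq> j \<Longrightarrow> ncstar (R2 q i j) \<in> S5_ideal_gens q"
  unfolding R2_def by (rule S5_star_in) (auto simp: S5_rels_def)
lemma R3s_in: "ncstar R3 \<in> S5_ideal_gens q"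
  unfolding R3_def by (rule S5_star_in) (auto simp: S5_rels_def)
lemma R3_in: "R3 \<in> S5_ideal_gens q"
  unfolding R3_def by (rule S5_in) (auto simp: S5_rels_def)
lemma R4_in: "R4 \<in> S5_ideal_gens q"
  unfolding R4_def by (rule S5_in) (auto simp: S5_rels_def)

lemmas ncdefs = R1_def R2_def R3_def R4_def ncsub_def ncmul_def ncsmult_def ncgen_def ncadd_def ncone_def ncstar_def
   ncsubst_def p_gen_def

lemma rel1: "j \<noteq> I1 \<Longrightarrow> CP2_zero q [(1, [(I1,I1),(I1,j)]), (- of_real (q^2), [(I1,j),(I1,I1)])]"
  unfolding CP2_zero_def in_ideal_def
  apply (rule exI[where x="[(1, [ZS I1, Z I1], R2 q I1 j, []), (of_real q, [ZS I1], R1 q I1 j, [ZS I1]),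
                            (- of_real (q^2), [ZS I1, Z j], R3, [])]"])
  apply (intro conjI)
  subgoal using R1_in R2_in R3_in by (cases j) auto
  apply (rule ext)
  apply (simp add: ncdefs)
  apply (auto simp: algebra_simps power2_eq_square)
  done

lemma rel2: "j \<noteq> I1 \<Longrightarrow> CP2_zero q [(1, [(j,I1),(I1,I1)]), (- of_real (q^2), [(I1,I1),(j,I1)])]"
  unfolding CP2_zero_def in_ideal_def
  apply (rule exI[where x="[(1, [], ncstar (R2 q I1 j), [ZS I1, Z I1]), (of_real q, [Z I1], ncstar (R1 q I1 j), [Z I1]),
                            (- of_real (q^2), [], ncstar R3, [ZS j, Z I1])]"])
  apply (intro conjI)
  subgoal using R1s_in R2s_in R3s_in by (cases j) auto
  apply (rule ext)
  apply (simp add: ncdefs)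
  apply (auto simp: algebra_simps power2_eq_square)
  done

lemma rel3: "q \<noteq> 0 \<Longrightarrow> i \<noteq> I1 \<Longrightarrow> j \<noteq> I1 \<Longrightarrow> CP2_zero q [(1, [(I1,I1),(i,j)]), (-1, [(i,j),(I1,I1)])]"
  unfolding CP2_zero_def in_ideal_def
  apply (rule exI[where x="[(1/of_real q, [ZS i], R2 q I1 j, [Z I1]), (-1/of_real q, [], ncstar (R1 q I1 i), [Z j, Z I1]),
                            (1/of_real q, [ZS I1, ZS i], R1 q I1 j, []), (-1/of_real q, [ZS I1], R2 q i I1, [Z j])]"])
  apply (intro conjI)
  subgoal using R1s_in R2_in R1_in by (cases i; cases j) auto
  apply (rule ext)
  by (simp add: ncdefs; auto simp: field_simps power2_eq_square)

lemma rel4: "CP2_zero q [(1, [(I1,I1)]), (-1, [(I1,I1),(I1,I1)]), (-1, [(I1,I2),(I2,I1)]), (-1, [(I1,I3),(I3,I1)])]"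
  unfolding CP2_zero_def in_ideal_def
  apply (rule exI[where x="[(-1, [ZS I1], R4, [Z I1])]"])
  apply (intro conjI)
  subgoal using R4_in by auto
  apply (rule ext)
  by (simp add: ncdefs; auto simp: algebra_simps)



lemma ell2_zero: "(\<lambda>k. 0) \<in> ell2" by (simp add: ell2_def)

lemma ell2_add: assumes "x \<in> ell2" "y \<in> ell2" shows "(\<lambda>k. x k + y k) \<in> ell2"
proof -
  have sx: "(\<lambda>k. (cmod (x k))^2) summable_on UNIV" and sy: "(\<lambda>k. (cmod (y k))^2) summable_on UNIV"
    using assms by (auto simp: ell2_def)
  have s: "(\<lambda>k. 2*(cmod (x k))^2 + 2*(cmod (y k))^2) summable_on UNIV"
    by (intro summable_on_add summable_on_cmult_right sx sy)
  have le: "(cmod (x k + y k))^2 \<le> 2*(cmod (x k))^2 + 2*(cmod (y k))^2" for k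
  proof -
    have "cmod (x k + y k) \<le> cmod (x k) + cmod (y k)" by (rule norm_triangle_ineq)
    hence "(cmod (x k + y k))^2 \<le> (cmod (x k) + cmod (y k))^2" by (simp add: power_mono)
    also have "\<dots> \<le> 2*(cmod (x k))^2 + 2*(cmod (y k))^2"
      using sum_squares_ge_zero[of "cmod (x k) - cmod (y k)" 0] by (simp add: power2_eq_square algebra_simps)
    finally show ?thesis .
  qed
  show ?thesis unfolding ell2_def
    by (auto intro!: summable_on_comparison_test[OF s] le)
qed

lemma ell2_scale: assumes "x \<in> ell2" shows "(\<lambda>k. c * x k) \<in> ell2"
proof -
  have "(\<lambda>k. (cmod c)^2 * (cmod (x k))^2) summable_on UNIV"
    using assms by (intro summable_on_cmult_right) (auto simp: ell2_def)
  thus ?thesis by (simp add: ell2_def norm_mult power_mult_distrib)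
qed

lemma inner_summable: assumes "x \<in> ell2" "y \<in> ell2" shows "(\<lambda>k. cnj (x k) * y k) summable_on UNIV"
proof -
  have s: "(\<lambda>k. (cmod (x k))^2 + (cmod (y k))^2) summable_on UNIV"
    using assms by (intro summable_on_add) (auto simp: ell2_def)
  have le: "norm (cnj (x k) * y k) \<le> (cmod (x k))^2 + (cmod (y k))^2" for k
  proof -
    have "norm (cnj (x k) * y k) = cmod (x k) * cmod (y k)" by (simp add: norm_mult)
    also have "\<dots> \<le> (cmod (x k))^2 + (cmod (y k))^2"
    proof -
      have h1: "0 \<le> cmod (x k) * cmod (y k)" by simp
      have h2: "0 \<le> (cmod (x k) - cmod (y k))^2" by simp
      show ?thesis using h1 h2 unfolding power2_diff by linarith
    qed
    finally show ?thesis .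
  qed
  have "(\<lambda>k. norm (cnj (x k) * y k)) summable_on UNIV"
    by (rule summable_on_comparison_test[OF s]) (auto intro: le)
  thus ?thesis by (simp add: summable_on_iff_abs_summable_on_complex)
qed

lemma l2inner_add_right: assumes "x \<in> ell2" "y \<in> ell2" "z \<in> ell2"
  shows "l2inner x (\<lambda>k. y k + z k) = l2inner x y + l2inner x z"
  unfolding l2inner_def using inner_summable[OF assms(1,2)] inner_summable[OF assms(1,3)]
  by (simp add: distrib_left infsum_add)

lemma l2inner_zero_right: "l2inner x (\<lambda>k. 0) = 0" by (simp add: l2inner_def)

lemma l2inner_self: assumes "y \<in> ell2"
  shows "l2inner y y = of_real (infsum (\<lambda>k. (cmod (y k))^2) UNIV)"
proof -
  have s: "(\<lambda>k. (cmod (y k))^2) summable_on UNIV" using assms by (simp add: ell2_def)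
  have "((\<lambda>k. complex_of_real ((cmod (y k))^2)) has_sum of_real (infsum (\<lambda>k. (cmod (y k))^2) UNIV)) UNIV"
    unfolding has_sum_of_real_iff using s by (rule has_sum_infsum)
  moreover have "(\<lambda>k. cnj (y k) * y k) = (\<lambda>k. complex_of_real ((cmod (y k))^2))"
    by (rule ext) (metis complex_norm_square mult.commute of_real_power)
  ultimately show ?thesis unfolding l2inner_def by (simp add: infsumI)
qed

lemma l2sum_nonneg: "0 \<le> infsum (\<lambda>k. (cmod (y k))^2) UNIV"
  by (rule infsum_nonneg) simp

lemma l2_zero: assumes "y \<in> ell2" "infsum (\<lambda>k. (cmod (y k))^2) UNIV \<le> 0" shows "y = (\<lambda>k. 0)"
proof (rule ext)
  fix k
  have "(cmod (y k))^2 = 0"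
    by (rule nonneg_infsum_le_0D[OF assms(2)]) (use assms(1) in \<open>auto simp: ell2_def\<close>)
  thus "y k = 0" by simp
qed



lemma bo_ell2: "bounded_op T \<Longrightarrow> x \<in> ell2 \<Longrightarrow> T x \<in> ell2" by (simp add: bounded_op_def)
lemma bo_add: "bounded_op T \<Longrightarrow> x \<in> ell2 \<Longrightarrow> y \<in> ell2 \<Longrightarrow> T (\<lambda>k. x k + y k) = (\<lambda>k. T x k + T y k)"
  by (simp add: bounded_op_def)
lemma bo_scale: "bounded_op T \<Longrightarrow> x \<in> ell2 \<Longrightarrow> T (\<lambda>k. c * x k) = (\<lambda>k. c * T x k)"
  by (simp add: bounded_op_def)
lemma bo_zero: "bounded_op T \<Longrightarrow> T (\<lambda>k. 0) = (\<lambda>k. 0)"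
  using bo_scale[of T "\<lambda>k. 0" 0] ell2_zero by simp

lemma bo_kernel_closed: assumes T: "bounded_op T" shows "closed_subspace {x \<in> ell2. T x = (\<lambda>k. 0)}"
  unfolding closed_subspace_def
proof (intro conjI ballI allI impI)
  show "{x \<in> ell2. T x = (\<lambda>k. 0)} \<subseteq> ell2" by auto
  show "(\<lambda>k. 0) \<in> {x \<in> ell2. T x = (\<lambda>k. 0)}" using ell2_zero bo_zero[OF T] by auto
next
  fix x y assume "x \<in> {x \<in> ell2. T x = (\<lambda>k. 0)}" "y \<in> {x \<in> ell2. T x = (\<lambda>k. 0)}"
  thus "(\<lambda>k. x k + y k) \<in> {x \<in> ell2. T x = (\<lambda>k. 0)}" using ell2_add bo_add[OF T] by auto
next
  fix x c assume "x \<in> {x \<in> ell2. T x = (\<lambda>k. 0)}"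
  thus "(\<lambda>k. c * x k) \<in> {x \<in> ell2. T x = (\<lambda>k. 0)}" using ell2_scale bo_scale[OF T] by auto
next
  fix s x
  assume a: "(\<forall>n. s n \<in> {x \<in> ell2. T x = (\<lambda>k. 0)}) \<and> x \<in> ell2 \<and> (\<lambda>n. l2norm (\<lambda>k. s n k - x k)) \<longlonglongrightarrow> 0"
  obtain C where C: "\<forall>x\<in>ell2. l2norm (T x) \<le> C * l2norm x" using T by (auto simp: bounded_op_def)
  have mx: "(\<lambda>k. -1 * x k) \<in> ell2" using a ell2_scale by blast
  have eq: "T (\<lambda>k. s n k - x k) = (\<lambda>k. - T x k)" for n
  proof -
    have "(\<lambda>k. s n k - x k) = (\<lambda>k. s n k + (-1 * x k))" by simp
    hence "T (\<lambda>k. s n k - x k) = (\<lambda>k. T (s n) k + T (\<lambda>k. -1 * x k) k)"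
      using bo_add[OF T, of "s n" "\<lambda>k. -1 * x k"] a mx by simp
    also have "\<dots> = (\<lambda>k. - T x k)" using a bo_scale[OF T, of x "-1"] by simp
    finally show ?thesis .
  qed
  have dn: "(\<lambda>k. s n k - x k) \<in> ell2" for n
  proof -
    have "(\<lambda>k. s n k + (-1 * x k)) \<in> ell2" using ell2_add a mx by blast
    thus ?thesis by simp
  qed
  have ln: "l2norm (\<lambda>k. - T x k) = l2norm (T x)" by (simp add: l2norm_def)
  have le: "l2norm (T x) \<le> C * l2norm (\<lambda>k. s n k - x k)" for n
    using C dn[of n] eq[of n] ln by metis
  have lim: "(\<lambda>n. C * l2norm (\<lambda>k. s n k - x k)) \<longlonglongrightarrow> 0"
    using a tendsto_mult_right_zero by blast
  have "l2norm (T x) \<le> 0"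
    by (rule tendsto_le[OF trivial_limit_sequentially lim tendsto_const]) (use le in auto)
  hence "infsum (\<lambda>k. (cmod (T x k))^2) UNIV \<le> 0" by (simp add: l2norm_def)
  hence "T x = (\<lambda>k. 0)" using l2_zero bo_ell2[OF T] a by blast
  thus "x \<in> {x \<in> ell2. T x = (\<lambda>k. 0)}" using a by simp
qed

theorem lemmaD2:
  fixes q :: real
    and P :: "idx \<times> idx \<Rightarrow> ('i \<Rightarrow> complex) \<Rightarrow> ('i \<Rightarrow> complex)"
  assumes "0 < q" and "q < 1"
    and "CP2_star_rep q P"
    and "irreducible_rep P"
  shows "{x \<in> ell2. P (I1, I1) x = (\<lambda>k. 0)} = {\<lambda>k. 0}
         \<or> (\<forall>x\<in>ell2. P (I1, I1) x = (\<lambda>k. 0) \<and> P (I1, I2) x = (\<lambda>k. 0) \<and> P (I1, I3) x = (\<lambda>k. 0)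
                    \<and> P (I2, I1) x = (\<lambda>k. 0) \<and> P (I3, I1) x = (\<lambda>k. 0))"
proof -
  have q0: "q \<noteq> 0" using assms(1) by simp
  have bnd: "bounded_op (P g)" for g using assms(3) unfolding CP2_star_rep_def by (cases g) auto
  have adj: "\<And>i j. is_adjoint (P (j,i)) (P (i,j))" using assms(3) unfolding CP2_star_rep_def by auto
  have zer: "\<And>f x. CP2_zero q f \<Longrightarrow> x \<in> ell2 \<Longrightarrow> evop P f x = (\<lambda>k. 0)"
    using assms(3) unfolding CP2_star_rep_def by auto
  define T where "T = P (I1, I1)"
  define K where "K = {x \<in> ell2. T x = (\<lambda>k. 0)}"
  have cK: "closed_subspace K" unfolding K_def T_def by (rule bo_kernel_closed[OF bnd])
  have Tz: "T (\<lambda>k. 0) = (\<lambda>k. 0)" unfolding T_def by (rule bo_zero[OF bnd])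
  have Pz: "P g (\<lambda>k. 0) = (\<lambda>k. 0)" for g by (rule bo_zero[OF bnd])
  have gen: "P g x \<in> K" if x: "x \<in> K" for g x
  proof -
    obtain i j where g: "g = (i, j)" by (cases g)
    have xe: "x \<in> ell2" and Tx: "T x = (\<lambda>k. 0)" using x by (auto simp: K_def)
    have Tx': "P (I1,I1) x = (\<lambda>k. 0)" using Tx by (simp add: T_def)
    have "T (P (i,j) x) = (\<lambda>k. 0)"
    proof (cases "i = I1"; cases "j = I1")
      assume "i = I1" "j = I1" thus ?thesis using Tx Tz by (simp add: T_def)
    next
      assume ij: "i = I1" "j \<noteq> I1"
      from zer[OF rel1[OF ij(2), of q] xe] show ?thesis using ij
        by (simp add: evop_def T_def Tx' Pz fun_eq_iff)
    next
      assume ij: "i \<noteq> I1" "j = I1"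
      from zer[OF rel2[OF ij(1), of q] xe] show ?thesis using ij q0
        by (simp add: evop_def T_def Tx' Pz fun_eq_iff)
    next
      assume ij: "i \<noteq> I1" "j \<noteq> I1"
      from zer[OF rel3[OF q0 ij] xe] show ?thesis using ij
        by (simp add: evop_def T_def Tx' Pz fun_eq_iff)
    qed
    thus ?thesis using g bo_ell2[OF bnd xe] by (simp add: K_def)
  qed
  have word: "foldr P u x \<in> K" if "x \<in> K" for u x
    using that by (induction u) (auto intro: gen)
  have Kadd: "(\<lambda>k. a k + b k) \<in> K" if "a \<in> K" "b \<in> K" for a b
    using cK that unfolding closed_subspace_def by blast
  have Ksc: "(\<lambda>k. c * a k) \<in> K" if "a \<in> K" for a c
    using cK that unfolding closed_subspace_def by blast
  have K0: "(\<lambda>k. 0) \<in> K" using cK unfolding closed_subspace_def by blast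
  have inv: "evop P f x \<in> K" if "x \<in> K" for f x
  proof (induction f)
    case Nil thus ?case using K0 by (simp add: evop_def)
  next
    case (Cons m f)
    obtain a u where m: "m = (a, u)" by (cases m)
    have "evop P (m # f) x = (\<lambda>k. a * foldr P u x k + evop P f x k)"
      by (simp add: evop_def m)
    thus ?case using Kadd[OF Ksc[OF word[OF that]] Cons.IH] by simp
  qed
  have "K = {\<lambda>k. 0} \<or> K = ell2"
    using assms(4) cK inv unfolding irreducible_rep_def by blast
  thus ?thesis
  proof
    assume "K = {\<lambda>k. 0}" thus ?thesis by (simp add: K_def T_def)
  next
    assume KE: "K = ell2"
    have T0: "T x = (\<lambda>k. 0)" if "x \<in> ell2" for x using that KE by (auto simp: K_def)
    have low: "P (I2,I1) x = (\<lambda>k. 0) \<and> P (I3,I1) x = (\<lambda>k. 0)" if xe: "x \<in> ell2" for x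
    proof -
      define y where "y = P (I2,I1) x"
      define w where "w = P (I3,I1) x"
      have ye: "y \<in> ell2" and we: "w \<in> ell2" using bo_ell2[OF bnd xe] by (auto simp: y_def w_def)
      have ye2: "P (I1,I2) y \<in> ell2" and we2: "P (I1,I3) w \<in> ell2" using bo_ell2[OF bnd] ye we by auto
      have sum0: "(\<lambda>k. P (I1,I2) y k + P (I1,I3) w k) = (\<lambda>k. 0)"
      proof -
        have t1: "P (I1,I1) x = (\<lambda>k. 0)" using T0[OF xe] by (simp add: T_def)
        have t2: "P (I1,I1) (\<lambda>k. 0) = (\<lambda>k. 0)" using Tz by (simp add: T_def)
        show ?thesis
        proof (rule ext)
          fix k
          have "evop P [(1, [(I1,I1)]), (-1, [(I1,I1),(I1,I1)]), (-1, [(I1,I2),(I2,I1)]), (-1, [(I1,I3),(I3,I1)])] x k = 0"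
            using zer[OF rel4[of q] xe] by simp
          hence "- P (I1,I2) y k - P (I1,I3) w k = 0" unfolding y_def w_def by (simp add: evop_def t1 t2)
          thus "P (I1,I2) y k + P (I1,I3) w k = 0" by (metis add.inverse_inverse add.right_inverse minus_diff_eq diff_minus_eq_add diff_0 minus_add_distrib)
        qed
      qed
      have a1: "l2inner y y = l2inner x (P (I1,I2) y)"
        using adj[of I1 I2] xe ye unfolding is_adjoint_def y_def by auto
      have a2: "l2inner w w = l2inner x (P (I1,I3) w)"
        using adj[of I1 I3] xe we unfolding is_adjoint_def w_def by auto
      have "l2inner y y + l2inner w w = 0"
        using a1 a2 l2inner_add_right[OF xe ye2 we2] sum0 l2inner_zero_right[of x] by metis
      hence "infsum (\<lambda>k. (cmod (y k))^2) UNIV + infsum (\<lambda>k. (cmod (w k))^2) UNIV = 0"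
        using l2inner_self[OF ye] l2inner_self[OF we] by (metis of_real_add of_real_eq_0_iff)
      hence "infsum (\<lambda>k. (cmod (y k))^2) UNIV \<le> 0" "infsum (\<lambda>k. (cmod (w k))^2) UNIV \<le> 0"
        using l2sum_nonneg[of y] l2sum_nonneg[of w] by linarith+
      thus ?thesis using l2_zero ye we unfolding y_def w_def by blast
    qed
    have up: "P (I1,j) x = (\<lambda>k. 0)" if xe: "x \<in> ell2" and j: "j = I2 \<or> j = I3" for x j
    proof -
      define y where "y = P (I1,j) x"
      have ye: "y \<in> ell2" using bo_ell2[OF bnd xe] by (simp add: y_def)
      have "P (j,I1) y = (\<lambda>k. 0)" using low[OF ye] j by auto
      moreover have "l2inner y y = l2inner x (P (j,I1) y)"
        using adj[of j I1] xe ye unfolding is_adjoint_def y_def by auto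
      ultimately have "l2inner y y = 0" using l2inner_zero_right by simp
      hence "infsum (\<lambda>k. (cmod (y k))^2) UNIV \<le> 0" using l2inner_self[OF ye] by simp
      thus ?thesis using l2_zero ye unfolding y_def by blast
    qed
    show ?thesis using T0 low up unfolding T_def by blast
  qed
qed


end
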